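(* Let $n$ be a prime and $k$ an integer with $2\le k<n/2$, and let $N=\binom{n}{k}/n$. Regard each $\underline{\mathbf{C}}_{\underline{g}}$ as the set of $k$-subsets of $[n]$ formed by the underlying sets of its vectors. Then the family $\{\underline{\mathbf{C}}_{\underline{g}}:\underline{g}\in\underline{\mathbf{G}}_{\mathrm{tot}}\}$ has exactly $N$ distinct members; any two of them are either equal or disjoint; and their union is the set $\binom{[n]}{k}$ of all $k$-subsets of $[n]$. Consequently, choosing generators $\underline{g}_1,\dots,\underline{g}_N\in\underline{\mathbf{G}}_{\mathrm{tot}}$ with pairwise distinct sets $\underline{\mathbf{C}}_{\underline{g}_i}$, the corresponding cycles $\boldsymbol{\mathcal{S}}_{\underline{g}_1},\dots,\boldsymbol{\mathcal{S}}_{\underline{g}_N}$ are Hamiltonian (Berge) cycles of $K_n^k$ whose hyperedge sets partition $\binom{[n]}{k}$, i.e. they form a Hamiltonian decomposition of $K_n^k$.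
   Context: $[n]=\{1,\dots,n\}$; reduction mod $n$ is entrywise with representatives in $[n]$, and $\underline{1}$ is the all-ones vector of length $k$. For an integer vector $\underline{g}=[g_1,\dots,g_k]$ with $g_i\ge1$ for $i\in[k-1]$ and $g_1+\dots+g_{k-1}\le n-1$, the representative vector is $\underline{r}_{\underline{g}}=[1,1+g_1,1+g_1+g_2,\dots,1+g_1+\cdots+g_{k-1}]$ and $\underline{\mathbf{C}}_{\underline{g}}=\{\underline{r}_{\underline{g}}+p\cdot\underline{1}\ (\mathrm{mod}\ n):p=0,\dots,n-1\}$. The generator set: let $\sigma_{\min}=k-1$ and $\sigma_{\max}=n-\lceil n/k\rceil$. For $\sigma\in[\sigma_{\min},\sigma_{\max}]$ let $\underline{\mathbf{S}}_\sigma=\{[c_1,\dots,c_{k-1}]\in\mathbb{Z}^{k-1}:\sum_i c_i=\sigma,\ 1\le c_i\le n-\sigma\}$ and $\underline{\mathbf{G}}_\sigma=\{[c_1,\dots,c_{k-1},m]:[c_1,\dots,c_{k-1}]\in\underline{\mathbf{S}}_\sigma\}$ where $m=-\sigma$ if $\sigma\le\lfloor n/2\rfloor$ and $m=n-\sigma$ otherwise. Finally $\underline{\mathbf{G}}_{\mathrm{tot}}=\bigcup_{\sigma=\sigma_{\min}}^{\sigma_{\max}}\underline{\mathbf{G}}_\sigma$. For $\underline{g}\in\underline{\mathbf{G}}_{\mathrm{tot}}$, the cycle $\boldsymbol{\mathcal{S}}_{\underline{g}}$ is $(v_0,\mathcal{E}_0,v_1,\mathcal{E}_1,\dots,v_{n-1},\mathcal{E}_{n-1},v_0)$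 with $v_p=1+p\,g_1\pmod n$ and $\mathcal{E}_p$ the set of entries of $\underline{r}_{\underline{g}}+p\,g_1\cdot\underline{1}\pmod n$. The complete $k$-uniform hypergraph $K_n^k$ has vertex set $[n]$ and every $k$-subset of $[n]$ as a hyperedge. A (Berge) Hamiltonian cycle is a sequence $(v_1,\mathcal{E}_1,v_2,\dots,v_n,\mathcal{E}_n,v_1)$ with $v_1,\dots,v_n$ a permutation of $[n]$, $\mathcal{E}_1,\dots,\mathcal{E}_n$ distinct hyperedges, and $v_i,v_{i+1}\in\mathcal{E}_i$ (indices mod $n$). A Hamiltonian decomposition of $K_n^k$ is a partition of its hyperedge set into $N$ sets each of which is the hyperedge set of a Hamiltonian cycle. *)

theory Defs
  imports Complex_Main "HOL-Computational_Algebra.Primes"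
begin

text \<open>Vectors of length k are integer lists; vertices of K_n^k are the integers 1..n.\<close>

definition modn :: "nat \<Rightarrow> int \<Rightarrow> int" where
  "modn n x = ((x - 1) mod int n) + 1"

definition rep_vec :: "int list \<Rightarrow> int list" where
  "rep_vec g = map (\<lambda>i. 1 + sum_list (take i g)) [0..<length g]"

definition Cvecs :: "nat \<Rightarrow> int list \<Rightarrow> int list set" where
  "Cvecs n g = {map (\<lambda>x. modn n (x + int p)) (rep_vec g) | p. p < n}"

definition Csets :: "nat \<Rightarrow> int list \<Rightarrow> int set set" where
  "Csets n g = set ` Cvecs n g"

definition sigma_max :: "nat \<Rightarrow> nat \<Rightarrow> int" where
  "sigma_max n k = int n - ceiling (real n / real k)"

definition S_sigma :: "nat \<Rightarrow> nat \<Rightarrow> int \<Rightarrow> int list set" where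
  "S_sigma n k \<sigma> = {c. length c = k - 1 \<and> sum_list c = \<sigma> \<and>
                        (\<forall>x \<in> set c. 1 \<le> x \<and> x \<le> int n - \<sigma>)}"

definition m_sigma :: "nat \<Rightarrow> int \<Rightarrow> int" where
  "m_sigma n \<sigma> = (if \<sigma> \<le> int (n div 2) then - \<sigma> else int n - \<sigma>)"

definition G_sigma :: "nat \<Rightarrow> nat \<Rightarrow> int \<Rightarrow> int list set" where
  "G_sigma n k \<sigma> = {c @ [m_sigma n \<sigma>] | c. c \<in> S_sigma n k \<sigma>}"

definition G_tot :: "nat \<Rightarrow> nat \<Rightarrow> int list set" where
  "G_tot n k = (\<Union>\<sigma> \<in> {int k - 1 .. sigma_max n k}. G_sigma n k \<sigma>)"

definition cyc_v :: "nat \<Rightarrow> int list \<Rightarrow> nat \<Rightarrow> int" where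
  "cyc_v n g p = modn n (1 + int p * hd g)"

definition cyc_E :: "nat \<Rightarrow> int list \<Rightarrow> nat \<Rightarrow> int set" where
  "cyc_E n g p = set (map (\<lambda>x. modn n (x + int p * hd g)) (rep_vec g))"

definition hyperedges :: "nat \<Rightarrow> nat \<Rightarrow> int set set" where
  "hyperedges n k = {E. E \<subseteq> {1..int n} \<and> card E = k}"

text \<open>Berge Hamiltonian cycle (v_0,E_0,...,v_(n-1),E_(n-1),v_0) in K_n^k.\<close>
definition berge_ham_cycle :: "nat \<Rightarrow> nat \<Rightarrow> (nat \<Rightarrow> int) \<Rightarrow> (nat \<Rightarrow> int set) \<Rightarrow> bool" where
  "berge_ham_cycle n k v E \<longleftrightarrow>
     bij_betw v {0..<n} {1..int n} \<and> inj_on E {0..<n} \<and>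
     (\<forall>i<n. E i \<in> hyperedges n k \<and> v i \<in> E i \<and> v ((i + 1) mod n) \<in> E i)"

end

theory Submission
  imports Defs
begin

lemma modn_range: assumes "0 < n" shows "modn n x \<in> {1..int n}"
proof -
  have "(x-1) mod int n < int n" using assms by simp
  moreover have "0 \<le> (x-1) mod int n" using assms by simp
  ultimately show ?thesis unfolding modn_def by simp
qed

lemma modn_mod: "modn n x mod int n = x mod int n"
proof -
  have "modn n x mod int n = ((x - 1) mod int n + 1) mod int n" unfolding modn_def ..
  also have "\<dots> = (x - 1 + 1) mod int n" by (rule mod_add_left_eq)
  finally show ?thesis by simp
qed

lemma modn_id: "y \<in> {1..int n} \<Longrightarrow> modn n y = y"
  unfolding modn_def by auto

lemma modn_eq_iff: "modn n x = modn n y \<longleftrightarrow> x mod int n = y mod int n"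
proof -
  have "modn n x = modn n y \<longleftrightarrow> (x - 1) mod int n = (y - 1) mod int n" unfolding modn_def by simp
  also have "\<dots> \<longleftrightarrow> int n dvd (x - 1) - (y - 1)" by (rule mod_eq_dvd_iff)
  also have "\<dots> \<longleftrightarrow> int n dvd x - y" by simp
  also have "\<dots> \<longleftrightarrow> x mod int n = y mod int n" by (rule mod_eq_dvd_iff[symmetric])
  finally show ?thesis .
qed

lemma modn_add: "modn n (modn n x + s) = modn n (x + s)"
proof -
  have "(modn n x + s) mod int n = (x + s) mod int n"
    using modn_mod[of n x] by (metis mod_add_left_eq)
  then show ?thesis using modn_eq_iff by blast
qed

definition sh :: "nat \<Rightarrow> int \<Rightarrow> int set \<Rightarrow> int set" where
  "sh n s A = (\<lambda>x. modn n (x + s)) ` A"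

lemma sh_sub: "0 < n \<Longrightarrow> sh n s A \<subseteq> {1..int n}"
  unfolding sh_def using modn_range by blast

lemma sh_sh: "sh n s (sh n t A) = sh n (t + s) A"
  unfolding sh_def image_image by (simp add: modn_add add.assoc)

lemma sh_0: assumes "A \<subseteq> {1..int n}" shows "sh n 0 A = A"
proof -
  have "(\<lambda>x. modn n (x + 0)) ` A = (\<lambda>x. x) ` A"
    by (rule image_cong) (use assms modn_id in auto)
  then show ?thesis unfolding sh_def by simp
qed

lemma mod_shift_eq: "(x + s) mod int n = (y + s) mod int n \<longleftrightarrow> x mod int n = y mod int n"
proof -
  have "(x + s) mod int n = (y + s) mod int n \<longleftrightarrow> int n dvd (x + s) - (y + s)" by (rule mod_eq_dvd_iff)
  also have "\<dots> \<longleftrightarrow> int n dvd x - y" by simp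
  also have "\<dots> \<longleftrightarrow> x mod int n = y mod int n" by (rule mod_eq_dvd_iff[symmetric])
  finally show ?thesis .
qed

lemma sh_mod: assumes "s mod int n = t mod int n" shows "sh n s A = sh n t A"
proof -
  have "(x + s) mod int n = (x + t) mod int n" for x
    using mod_shift_eq[of s x n t] assms by (simp add: add.commute)
  then have "modn n (x + s) = modn n (x + t)" for x using modn_eq_iff by blast
  then show ?thesis unfolding sh_def by simp
qed

lemma sh_inj: "inj_on (\<lambda>x. modn n (x + s)) {1..int n}"
proof (rule inj_onI)
  fix x y assume xy: "x \<in> {1..int n}" "y \<in> {1..int n}" "modn n (x + s) = modn n (y + s)"
  then have "(x + s) mod int n = (y + s) mod int n" using modn_eq_iff by blast
  then have "x mod int n = y mod int n" using mod_shift_eq by blast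
  then have "modn n x = modn n y" using modn_eq_iff by blast
  then show "x = y" using modn_id[OF xy(1)] modn_id[OF xy(2)] by simp
qed

lemma card_sh: "A \<subseteq> {1..int n} \<Longrightarrow> card (sh n s A) = card A"
  unfolding sh_def by (rule card_image, rule inj_on_subset[OF sh_inj])


lemma prime_inv:
  assumes "prime n" "\<not> int n dvd h"
  obtains u where "(u * h) mod int n = 1"
proof -
  have pi: "prime (int n)" using assms(1) by simp
  have "coprime (int n) h" using prime_imp_coprime[OF pi assms(2)] .
  then have g: "gcd h (int n) = 1" by (simp add: coprime_iff_gcd_eq_1 gcd.commute)
  obtain u v where "u * h + v * int n = gcd h (int n)" using bezout_int by blast
  then have "u * h + v * int n = 1" using g by simp
  moreover have "(u * h + v * int n) mod int n = (u * h) mod int n" by simp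
  ultimately have "(u * h) mod int n = 1 mod int n" by simp
  moreover have "1 < int n" using prime_gt_1_nat[OF assms(1)] by simp
  ultimately have "(u * h) mod int n = 1" by simp
  then show ?thesis using that by blast
qed

lemma sh_iter:
  assumes "sh n s A = A" "0 < n" shows "sh n (int j * s) A = A"
proof (induction j)
  case 0
  have "A \<subseteq> {1..int n}" using sh_sub[OF assms(2), of s A] assms(1) by simp
  then show ?case using sh_0 by simp
next
  case (Suc j)
  have "sh n (int (Suc j) * s) A = sh n s (sh n (int j * s) A)"
    by (simp add: sh_sh algebra_simps)
  then show ?case using Suc assms by simp
qed

lemma sh_stab:
  assumes "prime n" "A \<subseteq> {1..int n}" "A \<noteq> {}" "A \<noteq> {1..int n}" "sh n s A = A"
  shows "int n dvd s"
proof (rule ccontr)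
  assume nd: "\<not> int n dvd s"
  have n0: "0 < n" using prime_gt_1_nat[OF assms(1)] by simp
  obtain u where u: "(u * s) mod int n = 1" using prime_inv[OF assms(1) nd] by blast
  define j where "j = nat (u mod int n)"
  have "int j = u mod int n" unfolding j_def using n0 by simp
  then have "(int j * s) mod int n = (u * s) mod int n" by (simp add: mod_mult_left_eq)
  then have "(int j * s) mod int n = 1 mod int n" using u n0 prime_gt_1_nat[OF assms(1)] by simp
  then have "sh n 1 A = sh n (int j * s) A" by (intro sh_mod) simp
  also have "\<dots> = A" using sh_iter[OF assms(5) n0] .
  finally have s1: "sh n 1 A = A" .
  obtain a where a: "a \<in> A" using assms(3) by blast
  obtain x where x: "x \<in> {1..int n}" "x \<notin> A" using assms(2,4) by blast
  define i where "i = nat ((x - a) mod int n)"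
  have "int i = (x - a) mod int n" unfolding i_def using n0 by simp
  then have "(a + int i) mod int n = x mod int n" by (simp add: mod_add_right_eq)
  then have "modn n (a + int i) = modn n x" using modn_eq_iff n0 by blast
  then have "modn n (a + int i) = x" using modn_id x(1) by simp
  moreover have "modn n (a + int i) \<in> sh n (int i) A" unfolding sh_def using a by blast
  moreover have "sh n (int i * 1) A = A" using sh_iter[OF s1 n0] .
  ultimately show False using x(2) by simp
qed

lemma sh_distinct:
  assumes "prime n" "A \<subseteq> {1..int n}" "A \<noteq> {}" "A \<noteq> {1..int n}" "sh n s A = sh n t A"
  shows "s mod int n = t mod int n"
proof -
  have n0: "0 < n" using prime_gt_1_nat[OF assms(1)] by simp
  have "sh n (s - t) A = sh n (-t) (sh n s A)" by (simp add: sh_sh)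
  also have "\<dots> = sh n (-t) (sh n t A)" using assms(5) by simp
  also have "\<dots> = A" using sh_0[OF assms(2)] by (simp add: sh_sh)
  finally have "int n dvd (s - t)" using sh_stab[OF assms(1-4)] by blast
  then show ?thesis by (simp add: mod_eq_dvd_iff)
qed




definition orb :: "nat \<Rightarrow> int set \<Rightarrow> int set set" where
  "orb n A = {sh n (int p) A | p. p < n}"

lemma orb_range: assumes "0 < n" shows "orb n A = range (\<lambda>s. sh n s A)"
proof
  show "orb n A \<subseteq> range (\<lambda>s. sh n s A)" unfolding orb_def by auto
  show "range (\<lambda>s. sh n s A) \<subseteq> orb n A"
  proof
    fix B assume "B \<in> range (\<lambda>s. sh n s A)"
    then obtain s where B: "B = sh n s A" by auto
    define p where "p = nat (s mod int n)"
    have "int p = s mod int n" unfolding p_def using assms by simp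
    then have "sh n s A = sh n (int p) A" using sh_mod[of s n "int p" A] by simp
    moreover have "p < n" unfolding p_def using assms by (simp add: nat_less_iff)
    ultimately show "B \<in> orb n A" unfolding orb_def B by blast
  qed
qed

lemma orb_sh: assumes "0 < n" shows "orb n (sh n t A) = orb n A"
proof -
  have "range (\<lambda>s. sh n s (sh n t A)) = range (\<lambda>s. sh n (t + s) A)" by (simp add: sh_sh)
  also have "\<dots> = range (\<lambda>s. sh n s A)"
  proof
    show "range (\<lambda>s. sh n (t + s) A) \<subseteq> range (\<lambda>s. sh n s A)" by auto
    show "range (\<lambda>s. sh n s A) \<subseteq> range (\<lambda>s. sh n (t + s) A)"
    proof
      fix B assume "B \<in> range (\<lambda>s. sh n s A)"
      then obtain s where "B = sh n s A" by auto
      then have "B = sh n (t + (s - t)) A" by simp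
      then show "B \<in> range (\<lambda>s. sh n (t + s) A)" by blast
    qed
  qed
  finally show ?thesis using orb_range[OF assms] by simp
qed

lemma orb_self: assumes "0 < n" "A \<subseteq> {1..int n}" shows "A \<in> orb n A"
proof -
  have "A = sh n (int 0) A \<and> 0 < n" using sh_0[OF assms(2)] assms(1) by simp
  then show ?thesis unfolding orb_def by blast
qed

lemma orb_eq_or_disj:
  assumes "0 < n" shows "orb n A = orb n B \<or> orb n A \<inter> orb n B = {}"
proof (cases "orb n A \<inter> orb n B = {}")
  case False
  then obtain C where "C \<in> orb n A" "C \<in> orb n B" by blast
  then have "C \<in> range (\<lambda>s. sh n s A)" "C \<in> range (\<lambda>s. sh n s B)" using orb_range[OF assms] by blast+
  then obtain s t where "C = sh n s A" "C = sh n t B" by blast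
  then have "orb n A = orb n C" "orb n B = orb n C" using orb_sh[OF assms, of s A] orb_sh[OF assms, of t B] by simp_all
  then show ?thesis by simp
qed simp

lemma card_orb:
  assumes "prime n" "A \<subseteq> {1..int n}" "A \<noteq> {}" "A \<noteq> {1..int n}"
  shows "card (orb n A) = n"
proof -
  have "orb n A = (\<lambda>p. sh n (int p) A) ` {..<n}" unfolding orb_def by auto
  moreover have "inj_on (\<lambda>p. sh n (int p) A) {..<n}"
  proof (rule inj_onI)
    fix p q assume "p \<in> {..<n}" "q \<in> {..<n}" "sh n (int p) A = sh n (int q) A"
    then have "int p mod int n = int q mod int n" using sh_distinct[OF assms] by blast
    then show "p = q" using \<open>p \<in> _\<close> \<open>q \<in> _\<close> by simp
  qed
  ultimately show ?thesis by (simp add: card_image)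
qed

lemma orb_hyper:
  assumes "0 < n" "A \<in> hyperedges n k" "B \<in> orb n A" shows "B \<in> hyperedges n k"
proof -
  obtain p where B: "B = sh n (int p) A" using assms(3) unfolding orb_def by blast
  have "A \<subseteq> {1..int n}" "card A = k" using assms(2) unfolding hyperedges_def by auto
  then have "card B = k" using card_sh B by simp
  moreover have "B \<subseteq> {1..int n}" using sh_sub[OF assms(1)] B by simp
  ultimately show ?thesis unfolding hyperedges_def by simp
qed

lemma Csets_orb: "Csets n g = orb n (set (rep_vec g))"
proof -
  have "set ` {map (\<lambda>x. modn n (x + int p)) (rep_vec g) |p. p < n} =
        {set (map (\<lambda>x. modn n (x + int p)) (rep_vec g)) |p. p < n}" by blast
  then show ?thesis unfolding Csets_def Cvecs_def orb_def sh_def by simp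
qed

lemma cycE_sh: "cyc_E n g p = sh n (int p * hd g) (set (rep_vec g))"
  unfolding cyc_E_def sh_def by simp





lemma sigma_max_le: assumes "0 < n" "0 < k" shows "sigma_max n k \<le> int n - 1"
proof -
  have "0 < real n / real k" using assms by simp
  then have "1 \<le> ceiling (real n / real k)" by (simp only: one_le_ceiling)
  then show ?thesis unfolding sigma_max_def by simp
qed

lemma Gtot_props:
  assumes "g \<in> G_tot n k" "2 \<le> k" "0 < n"
  shows "card (set (rep_vec g)) = k \<and> set (rep_vec g) \<subseteq> {1..int n} \<and> 1 \<in> set (rep_vec g)
       \<and> 1 + hd g \<in> set (rep_vec g) \<and> 0 < hd g \<and> hd g < int n"
proof -
  obtain \<sigma> c where sg: "\<sigma> \<in> {int k - 1 .. sigma_max n k}" "c \<in> S_sigma n k \<sigma>"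
    and g: "g = c @ [m_sigma n \<sigma>]"
    using assms(1) unfolding G_tot_def G_sigma_def by auto
  have lc: "length c = k - 1" and sc: "sum_list c = \<sigma>"
    and ce: "\<And>x. x \<in> set c \<Longrightarrow> 1 \<le> x \<and> x \<le> int n - \<sigma>"
    using sg(2) unfolding S_sigma_def by auto
  have "sigma_max n k \<le> int n - 1" using sigma_max_le[OF assms(3)] assms(2) by simp
  then have smax: "\<sigma> \<le> int n - 1" using sg(1) by simp
  define f where "f i = 1 + sum_list (take i g)" for i
  have lg: "length g = k" using g lc assms(2) by simp
  have rv: "rep_vec g = map f [0..<k]" unfolding rep_vec_def f_def lg ..
  have tk: "take i g = take i c" if "i \<le> k - 1" for i using that g lc by simp
  have fs: "f (Suc i) = f i + c ! i" if "i < k - 1" for i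
    using that tk[of i] tk[of "Suc i"] lc by (simp add: f_def take_Suc_conv_app_nth)
  have cpos: "1 \<le> c ! i" if "i < k - 1" for i using ce[of "c ! i"] that lc by simp
  have mono: "f i < f j" if "j \<le> k - 1" "i < j" for i j
    using that
  proof (induction j)
    case 0 then show ?case by simp
  next
    case (Suc j)
    have "f (Suc j) = f j + c ! j" using fs Suc.prems by simp
    moreover have "1 \<le> c ! j" using cpos Suc.prems by simp
    moreover have "f i \<le> f j" using Suc by (cases "i = j") auto
    ultimately show ?case by simp
  qed
  have f0: "f 0 = 1" unfolding f_def by simp
  have fk: "f (k - 1) = 1 + \<sigma>" unfolding f_def using tk[of "k-1"] lc sc by simp
  have inj: "inj_on f {0..<k}"
  proof (rule inj_onI)
    fix i j assume "i \<in> {0..<k}" "j \<in> {0..<k}" "f i = f j"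
    moreover have "j \<le> k - 1" "i \<le> k - 1" using \<open>i \<in> _\<close> \<open>j \<in> _\<close> by auto
    ultimately show "i = j" using mono[of i j] mono[of j i] by (cases i j rule: linorder_cases) auto
  qed
  have "card (set (rep_vec g)) = k" unfolding rv using inj by (simp add: card_image)
  moreover have "set (rep_vec g) \<subseteq> {1..int n}"
  proof
    fix x assume "x \<in> set (rep_vec g)"
    then obtain i where i: "i < k" "x = f i" unfolding rv by auto
    have ik: "i \<le> k - 1" using i by simp
    have "f 0 \<le> f i" using mono[of i 0] ik by (cases "i = 0") auto
    moreover have "f i \<le> f (k - 1)" using mono[of "k-1" i] ik by (cases "i = k - 1") auto
    ultimately show "x \<in> {1..int n}" using i f0 fk smax by simp
  qed
  moreover have "f 0 \<in> set (map f [0..<k])" using assms(2) by simp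
  then have "1 \<in> set (rep_vec g)" unfolding rv using f0 by simp
  moreover have "f 1 = 1 + hd g" unfolding f_def using lg assms(2)
    by (cases g) (auto simp: take_Suc)
  moreover have "f 1 \<in> set (map f [0..<k])" using assms(2) by simp
  then have "1 + hd g \<in> set (rep_vec g)" unfolding rv using \<open>f 1 = 1 + hd g\<close> by simp
  moreover have "hd g = c ! 0" using g lc assms(2) by (cases c) auto
  moreover have "0 < hd g \<and> hd g < int n"
  proof -
    have "c ! 0 \<in> set c" using lc assms(2) by (simp add: nth_mem)
    then have "1 \<le> c ! 0" "c ! 0 \<le> int n - \<sigma>" using ce by auto
    moreover have "\<sigma> \<ge> 1" using sg(1) assms(2) by simp
    ultimately show ?thesis using \<open>hd g = c ! 0\<close> by simp
  qed
  ultimately show ?thesis by blast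
qed




lemma sum_list_le_len: "\<forall>x\<in>set xs. x \<le> (b::int) \<Longrightarrow> sum_list xs \<le> int (length xs) * b"
  by (induct xs) (auto simp: algebra_simps)

lemma build:
  assumes n0: "0 < n" and k2: "2 \<le> k" and Bs: "B \<subseteq> {1..int n}" and cB: "card B = k" and B1: "1 \<in> B"
    and gap: "\<And>x y. x \<in> B \<Longrightarrow> y \<in> B \<Longrightarrow> x < y \<Longrightarrow> (\<forall>z\<in>B. \<not> (x < z \<and> z < y))
               \<Longrightarrow> y - x \<le> int n + 1 - Max B"
  shows "\<exists>g\<in>G_tot n k. set (rep_vec g) = B"
proof -
  have fB: "finite B" using Bs finite_subset by blast
  define M where "M = Max B"
  have MB: "M \<in> B" unfolding M_def using fB B1 by (auto intro: Max_in)
  have Mge: "\<And>b. b \<in> B \<Longrightarrow> b \<le> M" unfolding M_def using fB by simp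
  define bs where "bs = sorted_list_of_set B"
  have lbs: "length bs = k" unfolding bs_def using cB by simp
  have sbs: "set bs = B" unfolding bs_def using fB by simp
  have ssort: "sorted_wrt (<) bs" unfolding bs_def by simp
  have srt: "sorted bs" unfolding bs_def by simp
  have lt: "bs ! i < bs ! j" if "i < j" "j < k" for i j
    using ssort that lbs by (simp add: sorted_wrt_iff_nth_less)
  have le: "bs ! i \<le> bs ! j" if "i \<le> j" "j < k" for i j
    using srt that lbs by (simp add: sorted_nth_mono)
  have inB: "bs ! i \<in> B" if "i < k" for i using that lbs sbs nth_mem by blast
  have exi: "\<exists>i<k. bs ! i = b" if "b \<in> B" for b using that sbs lbs by (metis in_set_conv_nth)
  have b0: "bs ! 0 = 1"
  proof -
    obtain j where j: "j < k" "bs ! j = 1" using exi[OF B1] by blast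
    have "bs ! 0 \<ge> 1" using inB[of 0] k2 Bs by auto
    moreover have "bs ! 0 \<le> bs ! j" using le[of 0 j] j by simp
    ultimately show ?thesis using j by simp
  qed
  have bk: "bs ! (k - 1) = M"
  proof -
    obtain j where j: "j < k" "bs ! j = M" using exi[OF MB] by blast
    have "bs ! (k - 1) \<le> M" using inB[of "k-1"] k2 Mge by simp
    moreover have "bs ! j \<le> bs ! (k - 1)" using le[of j "k-1"] j by simp
    ultimately show ?thesis using j by simp
  qed
  define d where "d i = bs ! Suc i - bs ! i" for i
  define c where "c = map d [0..<k-1]"
  define \<sigma> where "\<sigma> = M - 1"
  define g where "g = c @ [m_sigma n \<sigma>]"
  have lc: "length c = k - 1" unfolding c_def by simp
  have tel: "sum_list (take i c) = bs ! i - 1" if "i \<le> k - 1" for i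
    using that
  proof (induction i)
    case 0 then show ?case using b0 by simp
  next
    case (Suc i)
    have "take (Suc i) c = take i c @ [c ! i]" using Suc.prems lc by (simp add: take_Suc_conv_app_nth)
    then have "sum_list (take (Suc i) c) = bs ! i - 1 + d i" using Suc c_def by simp
    then show ?case unfolding d_def by simp
  qed
  have lg: "length g = k" unfolding g_def using lc k2 by simp
  have rv: "rep_vec g = bs"
  proof (rule nth_equalityI)
    show "length (rep_vec g) = length bs" unfolding rep_vec_def using lg lbs by simp
    fix i assume "i < length (rep_vec g)"
    then have i: "i < k" unfolding rep_vec_def using lg by simp
    have "take i g = take i c" unfolding g_def using i lc by simp
    then show "rep_vec g ! i = bs ! i" unfolding rep_vec_def using i lg tel[of i] by simp
  qed
  have sc: "sum_list c = \<sigma>" using tel[of "k-1"] lc bk unfolding \<sigma>_def by simp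
  have dge: "1 \<le> d i" if "i < k - 1" for i
  proof -
    have "Suc i < k" using that by simp
    then have "bs ! i < bs ! Suc i" using lt[of i "Suc i"] by simp
    then show ?thesis unfolding d_def by simp
  qed
  have dle: "d i \<le> int n - \<sigma>" if "i < k - 1" for i
  proof -
    have ik: "i < k" "Suc i < k" using that by auto
    have "\<forall>z\<in>B. \<not> (bs ! i < z \<and> z < bs ! Suc i)"
    proof
      fix z assume "z \<in> B"
      then obtain j where j: "j < k" "bs ! j = z" using exi by blast
      show "\<not> (bs ! i < z \<and> z < bs ! Suc i)"
      proof (cases "j \<le> i")
        case True then show ?thesis using le[of j i] j ik by simp
      next
        case False then show ?thesis using le[of "Suc i" j] j ik by simp
      qed
    qed
    then have "bs ! Suc i - bs ! i \<le> int n + 1 - M"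
      using gap[of "bs ! i" "bs ! Suc i"] inB[of i] inB[of "Suc i"] lt[of i "Suc i"] ik M_def by simp
    then show ?thesis unfolding d_def \<sigma>_def by simp
  qed
  have cS: "c \<in> S_sigma n k \<sigma>"
    unfolding S_sigma_def using lc sc dge dle by (auto simp: c_def)
  have "B \<subseteq> {1..M}" using Bs Mge by auto
  then have "k \<le> card {1..M}" using card_mono[OF finite_atLeastAtMost_int[of 1 M], of B] cB by simp
  moreover have "1 \<le> M" using MB Bs by auto
  ultimately have "int k \<le> M" by simp
  then have s1: "int k - 1 \<le> \<sigma>" unfolding \<sigma>_def by simp
  have "\<sigma> \<le> int (k - 1) * (int n - \<sigma>)"
    using sum_list_le_len[of c "int n - \<sigma>"] sc lc dle dge by (auto simp: c_def)
  then have "int n \<le> int k * (int n - \<sigma>)" using k2 by (simp add: of_nat_diff algebra_simps)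
  then have "real_of_int (int n) \<le> real_of_int (int k * (int n - \<sigma>))" by (simp only: of_int_le_iff)
  then have "real n \<le> real k * real_of_int (int n - \<sigma>)" by simp
  then have "real n / real k \<le> real_of_int (int n - \<sigma>)" using k2 by (simp add: divide_le_eq mult.commute)
  then have "ceiling (real n / real k) \<le> int n - \<sigma>" by (simp add: ceiling_le_iff)
  then have s2: "\<sigma> \<le> sigma_max n k" unfolding sigma_max_def by simp
  have "g \<in> G_sigma n k \<sigma>" unfolding G_sigma_def g_def using cS by blast
  then have "g \<in> G_tot n k" unfolding G_tot_def using s1 s2 by auto
  then show ?thesis using rv sbs by blast
qed




lemma cover:
  assumes pn: "prime n" and k2: "2 \<le> k" and A: "A \<in> hyperedges n k"
  shows "\<exists>g\<in>G_tot n k. A \<in> Csets n g"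
proof -
  have n0: "0 < n" using prime_gt_1_nat[OF pn] by simp
  have As: "A \<subseteq> {1..int n}" and cA: "card A = k" using A unfolding hyperedges_def by auto
  have fA: "finite A" using As finite_subset by blast
  have Ane: "A \<noteq> {}" using cA k2 by auto
  then obtain a where a: "a \<in> A" by blast
  define P where "P s = (1 \<in> sh n s A)" for s
  define m where "m s = nat (Max (sh n s A))" for s
  have "modn n (a + (1 - a)) \<in> sh n (1 - a) A" unfolding sh_def using a by blast
  moreover have "modn n (a + (1 - a)) = 1" using modn_id[of 1 n] n0 by simp
  ultimately have "P (1 - a)" unfolding P_def by simp
  then obtain s where Ps: "P s" and smin: "\<And>t. P t \<Longrightarrow> m s \<le> m t"
    using ex_has_least_nat[of P "1 - a" m] by blast
  define B where "B = sh n s A"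
  have Bs: "B \<subseteq> {1..int n}" unfolding B_def using sh_sub[OF n0] .
  have cB: "card B = k" unfolding B_def using card_sh[OF As] cA by simp
  have B1: "1 \<in> B" using Ps unfolding P_def B_def .
  have fB: "finite B" using Bs finite_subset by blast
  have MB: "Max B \<in> B" using fB B1 by (auto intro: Max_in)
  have Mge: "\<And>b. b \<in> B \<Longrightarrow> b \<le> Max B" using fB by simp
  have gap: "y - x \<le> int n + 1 - Max B"
    if xy: "x \<in> B" "y \<in> B" "x < y" "\<forall>z\<in>B. \<not> (x < z \<and> z < y)" for x y
  proof (rule ccontr)
    assume neg: "\<not> y - x \<le> int n + 1 - Max B"
    define B' where "B' = sh n (1 - y) B"
    have B'eq: "B' = sh n (s + (1 - y)) A" unfolding B'_def B_def by (simp add: sh_sh)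
    have "modn n (y + (1 - y)) \<in> B'" unfolding B'_def sh_def using xy(2) by blast
    moreover have "modn n (y + (1 - y)) = 1" using modn_id[of 1 n] n0 by simp
    ultimately have "1 \<in> B'" by simp
    then have PB': "P (s + (1 - y))" unfolding P_def B'eq .
    have bnd: "b' \<le> int n + 1 - y + x" if "b' \<in> B'" for b'
    proof -
      obtain b where b: "b \<in> B" "b' = modn n (b + (1 - y))" using \<open>b' \<in> B'\<close> unfolding B'_def sh_def by auto
      have bB: "1 \<le> b" "b \<le> int n" "1 \<le> x" "y \<le> int n" "1 \<le> y" using b(1) xy Bs by auto
      show ?thesis
      proof (cases "y \<le> b")
        case True
        have "b + (1 - y) \<in> {1..int n}" using True bB by simp
        then have "b' = b + (1 - y)" using b(2) modn_id by simp
        then show ?thesis using Mge[OF b(1)] MB Bs bB by auto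
      next
        case False
        then have "b \<le> x" using xy(4) b(1) by force
        have e: "modn n (b + (1 - y)) = modn n (b + (1 - y) + int n)"
          using modn_eq_iff[of n "b + (1 - y)" "b + (1 - y) + int n"] by simp
        have "b + (1 - y) + int n \<in> {1..int n}" using False bB \<open>b \<le> x\<close> xy(3) by simp
        then have "b' = b + (1 - y) + int n" using b(2) e modn_id by simp
        then show ?thesis using \<open>b \<le> x\<close> by simp
      qed
    qed
    have fB': "finite B'" unfolding B'_def sh_def using fB by simp
    have "Max B' \<le> int n + 1 - y + x" using bnd fB' \<open>1 \<in> B'\<close> by (subst Max_le_iff) auto
    then have "Max B' < Max B" using neg by simp
    moreover have "1 \<le> Max B'" using Max_ge[OF fB' \<open>1 \<in> B'\<close>] .
    ultimately have "m (s + (1 - y)) < m s" unfolding m_def B_def[symmetric] B'eq[symmetric] by simp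
    then show False using smin[OF PB'] by simp
  qed
  obtain g where g: "g \<in> G_tot n k" "set (rep_vec g) = B"
    using build[OF n0 k2 Bs cB B1 gap] by blast
  have "A = sh n (- s) B" unfolding B_def using sh_0[OF As] by (simp add: sh_sh)
  then have "A \<in> orb n B" using orb_range[OF n0] by auto
  then show ?thesis using g Csets_orb by metis
qed



lemma mul_inj:
  assumes pn: "prime n" and h: "\<not> int n dvd h" and pq: "p < n" "q < n"
    and e: "(int p * h) mod int n = (int q * h) mod int n"
  shows "p = q"
proof -
  have pi: "prime (int n)" using pn by simp
  have "int n dvd int p * h - int q * h" using e by (simp add: mod_eq_dvd_iff)
  then have "int n dvd (int p - int q) * h" by (simp add: algebra_simps)
  then have "int n dvd (int p - int q)" using prime_dvd_mult_iff[OF pi] h by blast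
  then have "int p mod int n = int q mod int n" by (simp add: mod_eq_dvd_iff)
  then show ?thesis using pq by simp
qed

lemma hd_not_dvd:
  assumes "0 < h" "h < int n" shows "\<not> int n dvd h"
  using assms zdvd_imp_le by fastforce

lemma cycE_img:
  assumes pn: "prime n" and k2: "2 \<le> k" and g: "g \<in> G_tot n k"
  shows "cyc_E n g ` {0..<n} = Csets n g"
proof -
  have n0: "0 < n" using prime_gt_1_nat[OF pn] by simp
  define R where "R = set (rep_vec g)"
  define h where "h = hd g"
  have P: "0 < h" "h < int n" using Gtot_props[OF g k2 n0] unfolding h_def by auto
  have nd: "\<not> int n dvd h" using hd_not_dvd[OF P] .
  obtain u where u: "(u * h) mod int n = 1" using prime_inv[OF pn nd] by blast
  have C: "Csets n g = orb n R" unfolding R_def by (rule Csets_orb)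
  show ?thesis
  proof
    show "cyc_E n g ` {0..<n} \<subseteq> Csets n g"
      unfolding C orb_range[OF n0] cycE_sh R_def by auto
    show "Csets n g \<subseteq> cyc_E n g ` {0..<n}"
    proof
      fix X assume "X \<in> Csets n g"
      then obtain q where q: "q < n" "X = sh n (int q) R" unfolding C orb_def by blast
      define p where "p = nat ((int q * u) mod int n)"
      have ip: "int p = (int q * u) mod int n" unfolding p_def using n0 by simp
      have p: "p < n" unfolding p_def using n0 by (simp add: nat_less_iff)
      have "(int p * h) mod int n = (int q * u * h) mod int n" unfolding ip by (simp add: mod_mult_left_eq)
      also have "\<dots> = (int q * ((u * h) mod int n)) mod int n" by (simp add: mod_mult_right_eq mult.assoc)
      also have "\<dots> = int q mod int n" using u by simp
      finally have "sh n (int p * h) R = sh n (int q) R" by (rule sh_mod)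
      then have "X = cyc_E n g p" using q unfolding cycE_sh R_def h_def by simp
      then show "X \<in> cyc_E n g ` {0..<n}" using p by simp
    qed
  qed
qed

lemma berge_g:
  assumes pn: "prime n" and k2: "2 \<le> k" and kn: "k < n" and g: "g \<in> G_tot n k"
  shows "berge_ham_cycle n k (cyc_v n g) (cyc_E n g)"
proof -
  have n0: "0 < n" using prime_gt_1_nat[OF pn] by simp
  define R where "R = set (rep_vec g)"
  define h where "h = hd g"
  have P: "card R = k" "R \<subseteq> {1..int n}" "1 \<in> R" "1 + h \<in> R" "0 < h" "h < int n"
    using Gtot_props[OF g k2 n0] unfolding h_def R_def by auto
  have nd: "\<not> int n dvd h" using hd_not_dvd[OF P(5,6)] .
  have v: "cyc_v n g p = modn n (1 + int p * h)" for p unfolding cyc_v_def h_def ..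
  have E: "cyc_E n g p = sh n (int p * h) R" for p unfolding cycE_sh R_def h_def ..
  have injv: "inj_on (cyc_v n g) {0..<n}"
  proof (rule inj_onI)
    fix p q assume pq: "p \<in> {0..<n}" "q \<in> {0..<n}" "cyc_v n g p = cyc_v n g q"
    then have "(int p * h + 1) mod int n = (int q * h + 1) mod int n"
      unfolding v using modn_eq_iff by (simp add: add.commute)
    then have "(int p * h) mod int n = (int q * h) mod int n" using mod_shift_eq by blast
    then show "p = q" using mul_inj[OF pn nd] pq by simp
  qed
  have vsub: "cyc_v n g ` {0..<n} \<subseteq> {1..int n}" unfolding v using modn_range[OF n0] by auto
  have "card (cyc_v n g ` {0..<n}) = card {1..int n}" using card_image[OF injv] by simp
  then have "cyc_v n g ` {0..<n} = {1..int n}" using card_subset_eq[OF _ vsub] by simp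
  then have bij: "bij_betw (cyc_v n g) {0..<n} {1..int n}" using injv unfolding bij_betw_def by simp
  have injE: "inj_on (cyc_E n g) {0..<n}"
  proof (rule inj_onI)
    fix p q assume pq: "p \<in> {0..<n}" "q \<in> {0..<n}" "cyc_E n g p = cyc_E n g q"
    have Rne: "R \<noteq> {}" using P(3) by blast
    have Rnf: "R \<noteq> {1..int n}"
    proof
      assume "R = {1..int n}"
      then have "card R = n" by simp
      moreover note kn
      ultimately show False using P(1) by simp
    qed
    have "(int p * h) mod int n = (int q * h) mod int n"
      using sh_distinct[OF pn P(2) Rne Rnf] pq(3) unfolding E by blast
    then show "p = q" using mul_inj[OF pn nd] pq by simp
  qed
  have "\<forall>i<n. cyc_E n g i \<in> hyperedges n k \<and> cyc_v n g i \<in> cyc_E n g i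
            \<and> cyc_v n g ((i + 1) mod n) \<in> cyc_E n g i"
  proof (intro allI impI conjI)
    fix i assume i: "i < n"
    show "cyc_E n g i \<in> hyperedges n k"
      unfolding hyperedges_def E using sh_sub[OF n0] card_sh[OF P(2)] P(1) by simp
    show "cyc_v n g i \<in> cyc_E n g i"
    proof -
      have "modn n (1 + int i * h) \<in> sh n (int i * h) R" unfolding sh_def using P(3) by blast
      then show ?thesis unfolding v E .
    qed
    show "cyc_v n g ((i + 1) mod n) \<in> cyc_E n g i"
    proof -
      have "modn n ((1 + h) + int i * h) \<in> sh n (int i * h) R" unfolding sh_def using P(4) by blast
      moreover have "(1 + int ((i + 1) mod n) * h) mod int n = ((1 + h) + int i * h) mod int n"
      proof -
        have "int ((i + 1) mod n) = (int i + 1) mod int n" by (simp add: zmod_int add.commute)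
        then have "(int ((i + 1) mod n) * h) mod int n = ((int i + 1) * h) mod int n"
          by (simp add: mod_mult_left_eq)
        then have "(int ((i + 1) mod n) * h + 1) mod int n = ((int i + 1) * h + 1) mod int n"
          using mod_shift_eq by blast
        then show ?thesis by (simp add: algebra_simps)
      qed
      then have "modn n (1 + int ((i + 1) mod n) * h) = modn n ((1 + h) + int i * h)"
        using modn_eq_iff by blast
      ultimately show ?thesis unfolding v E by simp
    qed
  qed
  then show ?thesis unfolding berge_ham_cycle_def using bij injE by blast
qed

theorem theorem1:
  fixes n k :: nat
  assumes "prime n" and "2 \<le> k" and "2 * k < n"
  shows "real (card (Csets n ` G_tot n k)) = real (n choose k) / real n
       \<and> (\<forall>g \<in> G_tot n k. \<forall>h \<in> G_tot n k. Csets n g = Csets n h \<or> Csets n g \<inter> Csets n h = {})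
       \<and> (\<Union>g \<in> G_tot n k. Csets n g) = hyperedges n k
       \<and> (\<forall>gs :: nat \<Rightarrow> int list.
            (\<forall>i < (n choose k) div n. gs i \<in> G_tot n k) \<and>
            inj_on (\<lambda>i. Csets n (gs i)) {..< (n choose k) div n} \<longrightarrow>
              (\<forall>i < (n choose k) div n. berge_ham_cycle n k (cyc_v n (gs i)) (cyc_E n (gs i)))
            \<and> (\<forall>i < (n choose k) div n. \<forall>j < (n choose k) div n. i \<noteq> j \<longrightarrow>
                 cyc_E n (gs i) ` {0..<n} \<inter> cyc_E n (gs j) ` {0..<n} = {})
            \<and> (\<Union>i < (n choose k) div n. cyc_E n (gs i) ` {0..<n}) = hyperedges n k)"
proof -
  note pn = assms(1) and k2 = assms(2)
  have n0: "0 < n" using prime_gt_1_nat[OF pn] by simp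
  have kn: "k < n" using assms(3) by simp
  define H where "H = hyperedges n k"
  define Orbs where "Orbs = Csets n ` G_tot n k"
  have RH: "set (rep_vec g) \<in> H" if "g \<in> G_tot n k" for g
    using Gtot_props[OF that k2 n0] unfolding H_def hyperedges_def by simp
  have cardC: "card (Csets n g) = n" if "g \<in> G_tot n k" for g
  proof -
    have P: "card (set (rep_vec g)) = k" "set (rep_vec g) \<subseteq> {1..int n}" "1 \<in> set (rep_vec g)"
      using Gtot_props[OF that k2 n0] by auto
    have "set (rep_vec g) \<noteq> {1..int n}" using P(1) kn by auto
    moreover have "set (rep_vec g) \<noteq> {}" using P(3) by auto
    ultimately show ?thesis unfolding Csets_orb using card_orb[OF pn P(2)] by simp
  qed
  have disj: "Csets n g = Csets n h \<or> Csets n g \<inter> Csets n h = {}" for g h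
    unfolding Csets_orb using orb_eq_or_disj[OF n0] .
  have union: "(\<Union>g \<in> G_tot n k. Csets n g) = H"
  proof
    show "(\<Union>g \<in> G_tot n k. Csets n g) \<subseteq> H"
    proof
      fix X assume "X \<in> (\<Union>g \<in> G_tot n k. Csets n g)"
      then obtain g where g: "g \<in> G_tot n k" "X \<in> Csets n g" by blast
      have "set (rep_vec g) \<in> hyperedges n k" using RH[OF g(1)] unfolding H_def .
      moreover have "X \<in> orb n (set (rep_vec g))" using g(2) unfolding Csets_orb .
      ultimately show "X \<in> H" using orb_hyper[OF n0] unfolding H_def by blast
    qed
    show "H \<subseteq> (\<Union>g \<in> G_tot n k. Csets n g)"
      using cover[OF pn k2] unfolding H_def by blast
  qed
  have finH: "finite H" unfolding H_def hyperedges_def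
    by (rule finite_subset[of _ "Pow {1..int n}"]) auto
  have cardH: "card H = n choose k"
  proof -
    have "card H = card {1..int n} choose k" unfolding H_def hyperedges_def
      by (rule n_subsets) simp
    then show ?thesis by simp
  qed
  have UO: "\<Union>Orbs = H" unfolding Orbs_def using union by simp
  have finO: "finite Orbs" using finite_UnionD[of Orbs] finH UO by simp
  have pw: "pairwise disjnt Orbs" unfolding pairwise_def disjnt_def
  proof (intro ballI impI)
    fix X Y assume "X \<in> Orbs" "Y \<in> Orbs" "X \<noteq> Y"
    then obtain g h where "X = Csets n g" "Y = Csets n h" unfolding Orbs_def by blast
    then show "X \<inter> Y = {}" using disj[of g h] \<open>X \<noteq> Y\<close> by simp
  qed
  have finA: "finite A" if "A \<in> Orbs" for A
  proof -
    have "A \<subseteq> \<Union>Orbs" using that by (rule Union_upper)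
    then show ?thesis using UO finH finite_subset by simp
  qed
  have "card H = sum card Orbs" using card_Union_disjoint[OF pw finA] UO by simp
  also have "\<dots> = sum (\<lambda>_. n) Orbs" unfolding Orbs_def using cardC by (intro sum.cong) auto
  also have "\<dots> = n * card Orbs" by simp
  finally have cO: "n choose k = n * card Orbs" using cardH by simp
  then have cOdiv: "card Orbs = (n choose k) div n" using n0 by simp
  have part1: "real (card Orbs) = real (n choose k) / real n" using cO n0 by simp
  have part4: "(\<forall>i < (n choose k) div n. berge_ham_cycle n k (cyc_v n (gs i)) (cyc_E n (gs i)))
            \<and> (\<forall>i < (n choose k) div n. \<forall>j < (n choose k) div n. i \<noteq> j \<longrightarrow>
                 cyc_E n (gs i) ` {0..<n} \<inter> cyc_E n (gs j) ` {0..<n} = {})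
            \<and> (\<Union>i < (n choose k) div n. cyc_E n (gs i) ` {0..<n}) = hyperedges n k"
    if gsG: "\<forall>i < (n choose k) div n. gs i \<in> G_tot n k"
      and inj: "inj_on (\<lambda>i. Csets n (gs i)) {..< (n choose k) div n}" for gs
  proof -
    have gsi: "gs i \<in> G_tot n k" if "i < (n choose k) div n" for i using gsG that by blast
    have ce: "cyc_E n (gs i) ` {0..<n} = Csets n (gs i)" if "i < (n choose k) div n" for i
      using cycE_img[OF pn k2 gsi[OF that]] .
    have A: "\<forall>i < (n choose k) div n. berge_ham_cycle n k (cyc_v n (gs i)) (cyc_E n (gs i))"
    proof (intro allI impI)
      fix i assume "i < (n choose k) div n"
      then show "berge_ham_cycle n k (cyc_v n (gs i)) (cyc_E n (gs i))"
        using berge_g[OF pn k2 kn gsi] by simp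
    qed
    have B: "\<forall>i < (n choose k) div n. \<forall>j < (n choose k) div n. i \<noteq> j \<longrightarrow>
                 cyc_E n (gs i) ` {0..<n} \<inter> cyc_E n (gs j) ` {0..<n} = {}"
    proof (intro allI impI)
      fix i j assume ij: "i < (n choose k) div n" "j < (n choose k) div n" "i \<noteq> j"
      have "Csets n (gs i) \<noteq> Csets n (gs j)"
      proof
        assume "Csets n (gs i) = Csets n (gs j)"
        then have "i = j" using inj_onD[OF inj] ij by simp
        then show False using ij(3) by simp
      qed
      then have "Csets n (gs i) \<inter> Csets n (gs j) = {}" using disj[of "gs i" "gs j"] by simp
      then show "cyc_E n (gs i) ` {0..<n} \<inter> cyc_E n (gs j) ` {0..<n} = {}"
        using ce[OF ij(1)] ce[OF ij(2)] by simp
    qed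
    define F where "F = (\<lambda>i. Csets n (gs i)) ` {..< (n choose k) div n}"
    have FO: "F \<subseteq> Orbs" unfolding F_def Orbs_def using gsi by auto
    have "card F = card Orbs" unfolding F_def using card_image[OF inj] cOdiv by simp
    then have FeqO: "F = Orbs" using card_subset_eq[OF finO FO] by simp
    have "(\<Union>i < (n choose k) div n. cyc_E n (gs i) ` {0..<n}) = (\<Union>i < (n choose k) div n. Csets n (gs i))"
      by (rule SUP_cong[OF refl]) (simp add: ce)
    also have "\<dots> = \<Union>F" unfolding F_def by simp
    also have "\<dots> = H" using FeqO UO by simp
    finally have C: "(\<Union>i < (n choose k) div n. cyc_E n (gs i) ` {0..<n}) = hyperedges n k"
      unfolding H_def .
    show ?thesis using A B C by blast
  qed
  have P4: "\<forall>gs :: nat \<Rightarrow> int list.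
            (\<forall>i < (n choose k) div n. gs i \<in> G_tot n k) \<and>
            inj_on (\<lambda>i. Csets n (gs i)) {..< (n choose k) div n} \<longrightarrow>
              (\<forall>i < (n choose k) div n. berge_ham_cycle n k (cyc_v n (gs i)) (cyc_E n (gs i)))
            \<and> (\<forall>i < (n choose k) div n. \<forall>j < (n choose k) div n. i \<noteq> j \<longrightarrow>
                 cyc_E n (gs i) ` {0..<n} \<inter> cyc_E n (gs j) ` {0..<n} = {})
            \<and> (\<Union>i < (n choose k) div n. cyc_E n (gs i) ` {0..<n}) = hyperedges n k"
  proof (rule allI, rule impI)
    fix gs :: "nat \<Rightarrow> int list"
    assume a: "(\<forall>i < (n choose k) div n. gs i \<in> G_tot n k) \<and>
            inj_on (\<lambda>i. Csets n (gs i)) {..< (n choose k) div n}"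
    show "(\<forall>i < (n choose k) div n. berge_ham_cycle n k (cyc_v n (gs i)) (cyc_E n (gs i)))
            \<and> (\<forall>i < (n choose k) div n. \<forall>j < (n choose k) div n. i \<noteq> j \<longrightarrow>
                 cyc_E n (gs i) ` {0..<n} \<inter> cyc_E n (gs j) ` {0..<n} = {})
            \<and> (\<Union>i < (n choose k) div n. cyc_E n (gs i) ` {0..<n}) = hyperedges n k"
      by (rule part4[OF conjunct1[OF a] conjunct2[OF a]])
  qed
  have D: "\<forall>g \<in> G_tot n k. \<forall>h \<in> G_tot n k. Csets n g = Csets n h \<or> Csets n g \<inter> Csets n h = {}"
    using disj by simp
  have P1: "real (card (Csets n ` G_tot n k)) = real (n choose k) / real n" using part1 unfolding Orbs_def .
  have U: "(\<Union>g \<in> G_tot n k. Csets n g) = hyperedges n k" using union unfolding H_def .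
  show ?thesis by (rule conjI[OF P1 conjI[OF D conjI[OF U P4]]])
qed

end
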